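(* Let $\mathcal{A}=\{d,u\}$. Consider the double comb context tree on $\mathcal{A}$, whose contexts are the words $u^k d$ and $d^k u$ for $k\geq 1$, and for each context $c$ let $q_c$ be a probability measure on $\mathcal{A}$. Let $(U_n)_{n\geq 0}$ be the associated variable length Markov chain (VLMC), started from a right-infinite word $U_0$ with $X_{-1}=u$, $X_0=d$, and for $n\geq 0$ let $X_n$ denote the first (leftmost) letter of $U_n$, so that $U_n=X_nX_{n-1}\cdots X_0X_{-1}\cdots$. Assume that for all $\alpha\neq\beta$ in $\mathcal{A}$, $\lim_{n\to\infty}\prod_{k=1}^{n}q_{\alpha^k\beta}(\alpha)=0$. Define the jump times $B_0=0$ and $B_{n+1}=\inf\{k>B_n : X_k\neq X_{k-1}\}$ for $n\geq 0$, the sojourn times $T_0=0$, $T_n=B_n-B_{n-1}$ for $n\geq 1$, and $J_n=X_{B_n}$ for $n\geq 0$. Then $(J_n,T_n)_{n\geq 0}$ is a Markov renewal chain with state space $\mathcal{A}\times\mathbb{N}$ whose semi-Markov kernel is given, for $\alpha\neq\beta$ in $\mathcal{A}$ and $k\geq 1$, by \[ p_{\alpha,\beta}(k)=\Big(\prod_{j=1}^{k-1}q_{\alpha^j\beta}(\alpha)\Big)\,q_{\alpha^k\beta}(\beta), \] (and $p_{\alpha,\alpha}(k)=0$, $p_{\alpha,\beta}(0)=0$), and the sequence of increments $(X_j)_{j\geq 0}$ is the $\mathcal{A}$-valued semi-Markov chain associated with $(J_n,T_n)_{n\geq0}$, i.e. $X_j=J_n$ whenever $B_n\leq j<B_{n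+1}$.
   Context: A VLMC defined by a context tree $\mathcal{T}$ (a saturated tree of finite words on $\mathcal{A}$ with at most countably many infinite branches; contexts are its leaves and infinite branches) and probability measures $(q_c)_c$ indexed by the contexts is the Markov chain $(U_n)$ on right-infinite words over $\mathcal{A}$ with transitions $\mathbb{P}(U_{n+1}=\alpha U_n\mid U_n)=q_{\mathrm{pref}(U_n)}(\alpha)$, where $\mathrm{pref}(w)$ is the unique context that is a prefix of $w$ (for the double comb, $\mathrm{pref}(w)=\alpha^k\beta$ when $w$ begins with exactly $k$ copies of $\alpha$ followed by $\beta\neq\alpha$). The walk $S_n=\sum_{\ell=1}^n X_\ell$ (with $d=-1$, $u=+1$) is the one-dimensional persistent random walk. A Markov chain $(J_n,T_n)_{n\geq0}$ on $E\times\mathbb{N}$ is a Markov renewal chain if $\mathbb{P}(J_{n+1}=b,T_{n+1}=k\mid J_n=a,T_n=j)=\mathbb{P}(J_{n+1}=b,T_{n+1}=k\mid J_n=a)=:p_{a,b}(k)$ for all $n,a,b,j,k$, with $p_{a,b}(0)=0$; the family $(p_{a,b}(k))$ is its semi-Markov kernel. If $T_0=0$ and $B_n=\sum_{i=0}^nT_i$, the associated semi-Markov chain is $(Z_j)_{j\geq0}$ with $Z_j=J_n$ for $B_n\leq j<B_{n+1}$. *)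

theory Defs
  imports "HOL-Probability.Probability"
begin

datatype letter = D | U

fun other :: "letter \<Rightarrow> letter" where
  "other D = U" | "other U = D"

text \<open>Context of U_n for the double comb, for a path w (w i = X_i, with X_{-1} = u, X_0 = d):
  the context is (w n)^k (other (w n)) where k = runlen w n is the length of the maximal run
  of the letter w n ending at position n (counting X_{-1} = u).  Since X_0 = d and X_{-1} = u,
  runlen w 0 = 1.\<close>
fun runlen :: "(nat \<Rightarrow> letter) \<Rightarrow> nat \<Rightarrow> nat" where
  "runlen w 0 = 1"
| "runlen w (Suc n) = (if w (Suc n) = w n then Suc (runlen w n) else 1)"

text \<open>Probability measures q_c, indexed by contexts c = a^k b (b = other a, k \<ge> 1):
  q a k is q_{a^k (other a)} (the index k = 0 is unused).
  The VLMC on the double comb started from U_0 with X_{-1} = u, X_0 = d, described through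
  the law of its increments: X_0 = d and
  P(X_0..X_{n+1} = w_0..w_{n+1}) = P(X_0..X_n = w_0..w_n) * q_{pref(U_n)}(w_{n+1}).\<close>
definition vlmc_double_comb ::
  "'w measure \<Rightarrow> (nat \<Rightarrow> 'w \<Rightarrow> letter) \<Rightarrow> (letter \<Rightarrow> nat \<Rightarrow> letter pmf) \<Rightarrow> bool" where
  "vlmc_double_comb M X q \<longleftrightarrow>
     prob_space M \<and>
     (\<forall>i. X i \<in> measurable M (count_space UNIV)) \<and>
     (\<forall>\<omega>\<in>space M. X 0 \<omega> = D) \<and>
     (\<forall>n w. measure M {\<omega>\<in>space M. \<forall>i\<le>Suc n. X i \<omega> = w i}
             = measure M {\<omega>\<in>space M. \<forall>i\<le>n. X i \<omega> = w i}
               * pmf (q (w n) (runlen w n)) (w (Suc n)))"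

primrec jumpB :: "(nat \<Rightarrow> letter) \<Rightarrow> nat \<Rightarrow> nat" where
  "jumpB x 0 = 0"
| "jumpB x (Suc n) = (LEAST k. k > jumpB x n \<and> x k \<noteq> x (k - 1))"

definition sojT :: "(nat \<Rightarrow> letter) \<Rightarrow> nat \<Rightarrow> nat" where
  "sojT x n = (if n = 0 then 0 else jumpB x n - jumpB x (n - 1))"

definition jumpJ :: "(nat \<Rightarrow> letter) \<Rightarrow> nat \<Rightarrow> letter" where
  "jumpJ x n = x (jumpB x n)"

definition markov_renewal_chain ::
  "'w measure \<Rightarrow> (nat \<Rightarrow> 'w \<Rightarrow> 'e) \<Rightarrow> (nat \<Rightarrow> 'w \<Rightarrow> nat) \<Rightarrow> ('e \<Rightarrow> 'e \<Rightarrow> nat \<Rightarrow> real) \<Rightarrow> bool" where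
  "markov_renewal_chain M J T p \<longleftrightarrow>
     (\<forall>a b. p a b 0 = 0) \<and>
     (\<forall>n js ts b k.
        measure M {\<omega>\<in>space M. (\<forall>i\<le>n. J i \<omega> = js i \<and> T i \<omega> = ts i) \<and> J (Suc n) \<omega> = b \<and> T (Suc n) \<omega> = k}
        = measure M {\<omega>\<in>space M. \<forall>i\<le>n. J i \<omega> = js i \<and> T i \<omega> = ts i} * p (js n) b k)"

definition semi_markov_chain_of ::
  "'w measure \<Rightarrow> (nat \<Rightarrow> 'w \<Rightarrow> 'e) \<Rightarrow> (nat \<Rightarrow> 'w \<Rightarrow> nat) \<Rightarrow> (nat \<Rightarrow> 'w \<Rightarrow> 'e) \<Rightarrow> bool" where
  "semi_markov_chain_of M J T Z \<longleftrightarrow>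
     (AE \<omega> in M. T 0 \<omega> = 0 \<and>
        (\<forall>n j. (\<Sum>i\<le>n. T i \<omega>) \<le> j \<and> j < (\<Sum>i\<le>Suc n. T i \<omega>) \<longrightarrow> Z j \<omega> = J n \<omega>))"

definition comb_kernel :: "(letter \<Rightarrow> nat \<Rightarrow> letter pmf) \<Rightarrow> letter \<Rightarrow> letter \<Rightarrow> nat \<Rightarrow> real" where
  "comb_kernel q a b k =
     (if a \<noteq> b \<and> k \<ge> 1 then (\<Prod>j\<in>{1..k-1}. pmf (q a j) a) * pmf (q a k) b else 0)"

end

theory Submission
  imports Defs
begin


instance letter :: countable by countable_datatype

definition infj :: "(nat \<Rightarrow> letter) \<Rightarrow> bool" where
  "infj x \<longleftrightarrow> (\<forall>m. \<exists>k>m. x k \<noteq> x (k - 1))"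

definition trunc :: "nat \<Rightarrow> (nat \<Rightarrow> letter) \<Rightarrow> nat \<Rightarrow> letter" where
  "trunc m x i = (if i \<le> m then x i else if even i then D else U)"

lemma runlen_cong: "(\<forall>i\<le>n. x i = y i) \<Longrightarrow> runlen x n = runlen y n"
  by (induction n) auto

lemma run_start: "\<exists>s\<le>n. runlen x s = 1 \<and> (\<forall>i. s \<le> i \<and> i \<le> n \<longrightarrow> x i = x s)"
proof (induction n)
  case 0 then show ?case by auto
next
  case (Suc n)
  then obtain s where s: "s \<le> n" "runlen x s = 1" "\<forall>i. s \<le> i \<and> i \<le> n \<longrightarrow> x i = x s" by blast
  show ?case
  proof (cases "x (Suc n) = x n")
    case True
    have "\<forall>i. s \<le> i \<and> i \<le> Suc n \<longrightarrow> x i = x s"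
    proof (intro allI impI)
      fix i assume i: "s \<le> i \<and> i \<le> Suc n"
      show "x i = x s"
      proof (cases "i = Suc n")
        case True
        then have "x i = x n" using \<open>x (Suc n) = x n\<close> by simp
        also have "x n = x s" using s(1,3) by blast
        finally show ?thesis .
      next
        case False
        then have "i \<le> n" using i by simp
        then show ?thesis using i s(3)[rule_format, of i] by simp
      qed
    qed
    moreover have "s \<le> Suc n" using s(1) by simp
    ultimately show ?thesis using s(2) by blast
  next
    case False
    then show ?thesis by (intro exI[of _ "Suc n"]) auto
  qed
qed

lemma runlen_const: "(\<forall>i. m < i \<and> i \<le> m + j \<longrightarrow> x i = x m) \<Longrightarrow> runlen x (m + j) = runlen x m + j"
proof (induction j)
  case 0 then show ?case by simp
next
  case (Suc j)
  have a: "x (Suc (m + j)) = x m" using Suc.prems[rule_format, of "Suc (m + j)"] by simp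
  have b: "x (m + j) = x m"
  proof (cases j)
    case 0 then show ?thesis by simp
  next
    case (Suc j') then show ?thesis using Suc.prems[rule_format, of "m + j"] by simp
  qed
  have IH: "runlen x (m + j) = runlen x m + j"
    using Suc.prems by (intro Suc.IH allI impI) simp
  have "x (Suc (m + j)) = x (m + j)" using a b by simp
  then show ?case using IH by simp
qed

lemma trunc_infj: "infj (trunc m x)"
  unfolding infj_def
proof
  fix m'
  show "\<exists>k>m'. trunc m x k \<noteq> trunc m x (k - 1)"
    by (rule exI[of _ "m' + m + 2"]) (auto simp: trunc_def)
qed

lemma trunc_agree: "i \<le> m \<Longrightarrow> trunc m x i = x i"
  by (simp add: trunc_def)

lemma jumpB_Suc_props:
  assumes "infj x"
  shows "jumpB x n < jumpB x (Suc n)" "x (jumpB x (Suc n)) \<noteq> x (jumpB x (Suc n) - 1)"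
    "\<And>j. jumpB x n < j \<Longrightarrow> j < jumpB x (Suc n) \<Longrightarrow> x j = x (j - 1)"
proof -
  obtain k where k: "k > jumpB x n" "x k \<noteq> x (k - 1)" using assms unfolding infj_def by blast
  have L: "jumpB x n < jumpB x (Suc n) \<and> x (jumpB x (Suc n)) \<noteq> x (jumpB x (Suc n) - 1)"
    using LeastI[of "\<lambda>k. k > jumpB x n \<and> x k \<noteq> x (k - 1)", OF conjI[OF k]] by simp
  then show "jumpB x n < jumpB x (Suc n)" "x (jumpB x (Suc n)) \<noteq> x (jumpB x (Suc n) - 1)" by auto
  fix j assume "jumpB x n < j" "j < jumpB x (Suc n)"
  then show "x j = x (j - 1)"
    using not_less_Least[of j "\<lambda>k. k > jumpB x n \<and> x k \<noteq> x (k - 1)"] by auto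
qed

lemma jumpB_const:
  assumes "infj x" "jumpB x n \<le> j" "j < jumpB x (Suc n)"
  shows "x j = x (jumpB x n)"
  using assms(2,3)
proof (induction j rule: dec_induct)
  case base then show ?case by simp
next
  case (step j)
  then have "x (Suc j) = x j" using jumpB_Suc_props(3)[OF assms(1), of n "Suc j"] by simp
  then show ?case using step by simp
qed

lemma jumpB_mono: "infj x \<Longrightarrow> i \<le> n \<Longrightarrow> jumpB x i \<le> jumpB x n"
proof (induction n)
  case 0 then show ?case by simp
next
  case (Suc n)
  then show ?case using jumpB_Suc_props(1)[OF Suc.prems(1), of n] by (auto simp: le_Suc_eq)
qed

lemma sum_sojT: "infj x \<Longrightarrow> (\<Sum>i\<le>n. sojT x i) = jumpB x n"
proof (induction n)
  case 0 then show ?case by (simp add: sojT_def)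
next
  case (Suc n)
  then show ?case using jumpB_Suc_props(1)[OF Suc.prems(1), of n] by (simp add: sojT_def)
qed

lemma runlen_jumpB: "infj x \<Longrightarrow> runlen x (jumpB x n) = 1"
proof (cases n)
  case 0 then show ?thesis by simp
next
  case (Suc m)
  assume "infj x"
  obtain j where j: "jumpB x (Suc m) = Suc j" using jumpB_Suc_props(1)[OF \<open>infj x\<close>, of m]
    using not0_implies_Suc by fastforce
  have "x (Suc j) \<noteq> x j" using jumpB_Suc_props(2)[OF \<open>infj x\<close>, of m] j by simp
  then show ?thesis using Suc j by (simp del: jumpB.simps)
qed

lemma jumpB_local:
  assumes "infj x" "infj y" "\<forall>i\<le>m. x i = y i"
  shows "jumpB x n \<le> m \<or> jumpB y n \<le> m \<Longrightarrow> jumpB x n = jumpB y n"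
proof (induction n)
  case 0 then show ?case by simp
next
  case (Suc n)
  have IH: "jumpB x n = jumpB y n"
    using Suc.prems jumpB_Suc_props(1)[OF assms(1), of n] jumpB_Suc_props(1)[OF assms(2), of n]
    by (intro Suc.IH) auto
  define P where "P = (\<lambda>z k. k > jumpB z n \<and> z k \<noteq> z (k - 1))"
  have sym: "jumpB u (Suc n) = jumpB v (Suc n)"
    if u: "infj u" "infj v" "\<forall>i\<le>m. u i = v i" "jumpB u n = jumpB v n" "jumpB u (Suc n) \<le> m" for u v
  proof -
    have "jumpB v (Suc n) = (LEAST k. k > jumpB v n \<and> v k \<noteq> v (k - 1))" by simp
    also have "\<dots> = jumpB u (Suc n)"
    proof (rule Least_equality)
      show "jumpB v n < jumpB u (Suc n) \<and> v (jumpB u (Suc n)) \<noteq> v (jumpB u (Suc n) - 1)"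
        using jumpB_Suc_props(1,2)[OF u(1), of n] u by auto
      fix k assume k: "jumpB v n < k \<and> v k \<noteq> v (k - 1)"
      show "jumpB u (Suc n) \<le> k"
      proof (rule ccontr)
        assume nk: "\<not> jumpB u (Suc n) \<le> k"
        then have "u k = u (k - 1)" using jumpB_Suc_props(3)[OF u(1), of n k] k u by auto
        moreover have "u k = v k" "u (k - 1) = v (k - 1)" using nk u by auto
        ultimately show False using k by simp
      qed
    qed
    finally show ?thesis by simp
  qed
  have a3': "\<forall>i\<le>m. y i = x i" using assms(3) by simp
  show ?case
    using Suc.prems sym[OF assms(1,2,3) IH] sym[OF assms(2,1) a3' IH[symmetric]]
    by (auto simp del: jumpB.simps)
qed



lemma UNIV_letter: "(UNIV :: letter set) = {D, U}"
  using letter.exhaust by auto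

lemma finite_letter[simp]: "finite (UNIV :: letter set)"
  by (simp add: UNIV_letter)

definition Wf :: "nat \<Rightarrow> (nat \<Rightarrow> letter) set" where
  "Wf m = Pi\<^sub>E {..m} (\<lambda>_. UNIV)"

lemma finite_Wf: "finite (Wf m)"
  unfolding Wf_def by (rule finite_PiE) auto

definition cylS :: "'w measure \<Rightarrow> (nat \<Rightarrow> 'w \<Rightarrow> letter) \<Rightarrow> nat \<Rightarrow> (nat \<Rightarrow> letter) \<Rightarrow> 'w set" where
  "cylS M X m w = {\<omega>\<in>space M. \<forall>i\<le>m. X i \<omega> = w i}"

definition depends :: "nat \<Rightarrow> ((nat \<Rightarrow> letter) \<Rightarrow> bool) \<Rightarrow> bool" where
  "depends m E \<longleftrightarrow> (\<forall>x y. (\<forall>i\<le>m. x i = y i) \<longrightarrow> E x = E y)"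

context
  fixes M :: "'w measure" and X :: "nat \<Rightarrow> 'w \<Rightarrow> letter" and q :: "letter \<Rightarrow> nat \<Rightarrow> letter pmf"
  assumes vlmc: "vlmc_double_comb M X q"
begin

interpretation P: prob_space M using vlmc unfolding vlmc_double_comb_def by auto

lemma Xm[measurable]: "X i \<in> measurable M (count_space UNIV)"
  using vlmc unfolding vlmc_double_comb_def by auto

lemma cyl_sets[measurable]: "cylS M X m w \<in> sets M"
  unfolding cylS_def by measurable

lemma cyl_rec: "measure M (cylS M X (Suc n) w) = measure M (cylS M X n w) * pmf (q (w n) (runlen w n)) (w (Suc n))"
  using vlmc unfolding vlmc_double_comb_def cylS_def by auto

lemma decomp_set:
  assumes dep: "depends m E"
  shows "{\<omega>\<in>space M. E (\<lambda>i. X i \<omega>)} = (\<Union>w\<in>Wf m \<inter> Collect E. cylS M X m w)"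
proof (intro equalityI subsetI)
  fix \<omega> assume \<omega>: "\<omega> \<in> {\<omega>\<in>space M. E (\<lambda>i. X i \<omega>)}"
  define w where "w = restrict (\<lambda>i. X i \<omega>) {..m}"
  have "w \<in> Wf m" unfolding w_def Wf_def by auto
  moreover have "E w" using \<omega> dep unfolding depends_def w_def
    by (metis (no_types, lifting) atMost_iff mem_Collect_eq restrict_apply')
  moreover have "\<omega> \<in> cylS M X m w" using \<omega> unfolding cylS_def w_def by auto
  ultimately show "\<omega> \<in> (\<Union>w\<in>Wf m \<inter> Collect E. cylS M X m w)" by blast
next
  fix \<omega> assume "\<omega> \<in> (\<Union>w\<in>Wf m \<inter> Collect E. cylS M X m w)"
  then obtain w where w: "E w" "\<omega> \<in> cylS M X m w" by blast
  then have "E (\<lambda>i. X i \<omega>)" using dep unfolding depends_def cylS_def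
    by (metis (mono_tags, lifting) mem_Collect_eq)
  then show "\<omega> \<in> {\<omega>\<in>space M. E (\<lambda>i. X i \<omega>)}" using w unfolding cylS_def by auto
qed

lemma dep_sets:
  assumes "depends m E"
  shows "{\<omega>\<in>space M. E (\<lambda>i. X i \<omega>)} \<in> sets M"
  unfolding decomp_set[OF assms] using finite_Wf by (intro sets.finite_UN) auto

lemma decomp_measure:
  assumes dep: "depends m E" and A: "A \<in> sets M"
  shows "measure M ({\<omega>\<in>space M. E (\<lambda>i. X i \<omega>)} \<inter> A) = (\<Sum>w\<in>Wf m \<inter> Collect E. measure M (cylS M X m w \<inter> A))"
proof -
  have "{\<omega>\<in>space M. E (\<lambda>i. X i \<omega>)} \<inter> A = (\<Union>w\<in>Wf m \<inter> Collect E. cylS M X m w \<inter> A)"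
    unfolding decomp_set[OF dep] by blast
  also have "measure M \<dots> = (\<Sum>w\<in>Wf m \<inter> Collect E. measure M (cylS M X m w \<inter> A))"
  proof (rule measure_finite_Union)
    show "finite (Wf m \<inter> Collect E)" using finite_Wf by auto
    show "(\<lambda>w. cylS M X m w \<inter> A) ` (Wf m \<inter> Collect E) \<subseteq> sets M" using A by auto
    show "disjoint_family_on (\<lambda>w. cylS M X m w \<inter> A) (Wf m \<inter> Collect E)"
      unfolding disjoint_family_on_def
    proof (intro ballI impI)
      fix w w' assume w: "w \<in> Wf m \<inter> Collect E" "w' \<in> Wf m \<inter> Collect E" "w \<noteq> w'"
      then obtain i where "i \<le> m" "w i \<noteq> w' i" unfolding Wf_def
        by (metis IntD1 PiE_ext atMost_iff)
      then show "cylS M X m w \<inter> A \<inter> (cylS M X m w' \<inter> A) = {}" unfolding cylS_def by auto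
    qed
    show "\<And>w. emeasure M (cylS M X m w \<inter> A) \<noteq> \<infinity>" by (simp add: P.emeasure_eq_measure)
  qed
  finally show ?thesis .
qed

lemma ext1:
  assumes dep: "depends m E" and EA: "\<And>w. E w \<Longrightarrow> w m = a \<and> runlen w m = r"
  shows "measure M {\<omega>\<in>space M. E (\<lambda>i. X i \<omega>) \<and> X (Suc m) \<omega> = c}
       = measure M {\<omega>\<in>space M. E (\<lambda>i. X i \<omega>)} * pmf (q a r) c"
proof -
  define A where "A = {\<omega>\<in>space M. X (Suc m) \<omega> = c}"
  have A: "A \<in> sets M" unfolding A_def by measurable
  have "measure M {\<omega>\<in>space M. E (\<lambda>i. X i \<omega>) \<and> X (Suc m) \<omega> = c}
      = measure M ({\<omega>\<in>space M. E (\<lambda>i. X i \<omega>)} \<inter> A)" unfolding A_def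
    by (rule arg_cong[where f="measure M"]) blast
  also have "\<dots> = (\<Sum>w\<in>Wf m \<inter> Collect E. measure M (cylS M X m w \<inter> A))"
    by (rule decomp_measure[OF dep A])
  also have "\<dots> = (\<Sum>w\<in>Wf m \<inter> Collect E. measure M (cylS M X m w) * pmf (q a r) c)"
  proof (rule sum.cong[OF refl])
    fix w assume w: "w \<in> Wf m \<inter> Collect E"
    define w' where "w' = w(Suc m := c)"
    have "cylS M X m w \<inter> A = cylS M X (Suc m) w'"
      unfolding cylS_def A_def w'_def by (auto simp: le_Suc_eq)
    moreover have "cylS M X m w' = cylS M X m w" unfolding cylS_def w'_def by auto
    moreover have "w' m = a" "runlen w' m = r" "w' (Suc m) = c"
      using EA[of w] w runlen_cong[of m w' w] unfolding w'_def by auto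
    ultimately show "measure M (cylS M X m w \<inter> A) = measure M (cylS M X m w) * pmf (q a r) c"
      using cyl_rec[of m w'] by simp
  qed
  also have "\<dots> = (\<Sum>w\<in>Wf m \<inter> Collect E. measure M (cylS M X m w \<inter> space M)) * pmf (q a r) c"
    by (simp add: sum_distrib_right cylS_def Int_absorb2)
  also have "\<dots> = measure M {\<omega>\<in>space M. E (\<lambda>i. X i \<omega>)} * pmf (q a r) c"
    using decomp_measure[OF dep sets.top] by (simp add: Int_absorb2)
  finally show ?thesis .
qed

lemma ext_run:
  assumes dep: "depends m E" and EA: "\<And>w. E w \<Longrightarrow> w m = a \<and> runlen w m = r"
  shows "measure M {\<omega>\<in>space M. E (\<lambda>i. X i \<omega>) \<and> (\<forall>i. Suc m \<le> i \<and> i \<le> m + j \<longrightarrow> X i \<omega> = a)}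
       = measure M {\<omega>\<in>space M. E (\<lambda>i. X i \<omega>)} * (\<Prod>i\<in>{r..<r+j}. pmf (q a i) a)"
proof (induction j)
  case 0
  have "{\<omega>\<in>space M. E (\<lambda>i. X i \<omega>) \<and> (\<forall>i. Suc m \<le> i \<and> i \<le> m + 0 \<longrightarrow> X i \<omega> = a)}
     = {\<omega>\<in>space M. E (\<lambda>i. X i \<omega>)}" by auto
  then show ?case by simp
next
  case (Suc j)
  define Ej where "Ej = (\<lambda>w. E w \<and> (\<forall>i. Suc m \<le> i \<and> i \<le> m + j \<longrightarrow> w i = a))"
  have depj: "depends (m + j) Ej" using dep unfolding depends_def Ej_def
    by (metis (no_types, lifting) le_add1 order_trans)
  have EAj: "w (m + j) = a \<and> runlen w (m + j) = r + j" if "Ej w" for w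
  proof -
    have wm: "w m = a" "runlen w m = r" using EA that unfolding Ej_def by auto
    have "\<forall>i. m < i \<and> i \<le> m + j \<longrightarrow> w i = w m" using that wm unfolding Ej_def by auto
    then have "runlen w (m + j) = runlen w m + j" by (rule runlen_const)
    moreover have "w (m + j) = a" using that wm unfolding Ej_def by (cases j) auto
    ultimately show ?thesis using wm by simp
  qed
  have "{\<omega>\<in>space M. E (\<lambda>i. X i \<omega>) \<and> (\<forall>i. Suc m \<le> i \<and> i \<le> m + Suc j \<longrightarrow> X i \<omega> = a)}
      = {\<omega>\<in>space M. Ej (\<lambda>i. X i \<omega>) \<and> X (Suc (m + j)) \<omega> = a}"
    unfolding Ej_def by (auto simp: le_Suc_eq) (metis Suc_le_mono le_add1 order_refl)
  then have "measure M {\<omega>\<in>space M. E (\<lambda>i. X i \<omega>) \<and> (\<forall>i. Suc m \<le> i \<and> i \<le> m + Suc j \<longrightarrow> X i \<omega> = a)}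
      = measure M {\<omega>\<in>space M. Ej (\<lambda>i. X i \<omega>)} * pmf (q a (r + j)) a"
    using ext1[OF depj EAj] by simp
  also have "\<dots> = measure M {\<omega>\<in>space M. E (\<lambda>i. X i \<omega>)} * (\<Prod>i\<in>{r..<r+j}. pmf (q a i) a) * pmf (q a (r + j)) a"
    using Suc.IH unfolding Ej_def by simp
  also have "\<dots> = measure M {\<omega>\<in>space M. E (\<lambda>i. X i \<omega>)} * (\<Prod>i\<in>{r..<r+Suc j}. pmf (q a i) a)"
    by (simp add: prod.atLeastLessThan_Suc)
  finally show ?case .
qed

lemma depends_run:
  assumes dep: "depends m E" and EA: "\<And>w. E w \<Longrightarrow> w m = a \<and> runlen w m = r"
  shows "depends (m + j) (\<lambda>w. E w \<and> (\<forall>i. Suc m \<le> i \<and> i \<le> m + j \<longrightarrow> w i = a))"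
    and "\<And>w. E w \<and> (\<forall>i. Suc m \<le> i \<and> i \<le> m + j \<longrightarrow> w i = a) \<Longrightarrow> w (m + j) = a \<and> runlen w (m + j) = r + j"
proof -
  define Ej where "Ej = (\<lambda>w. E w \<and> (\<forall>i. Suc m \<le> i \<and> i \<le> m + j \<longrightarrow> w i = a))"
  show "depends (m + j) (\<lambda>w. E w \<and> (\<forall>i. Suc m \<le> i \<and> i \<le> m + j \<longrightarrow> w i = a))"
    using dep unfolding depends_def
    by (metis (no_types, lifting) le_add1 order_trans)
  fix w assume that: "E w \<and> (\<forall>i. Suc m \<le> i \<and> i \<le> m + j \<longrightarrow> w i = a)"
  have wm: "w m = a" "runlen w m = r" using EA that by auto
  have "\<forall>i. m < i \<and> i \<le> m + j \<longrightarrow> w i = w m" using that wm by auto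
  then have "runlen w (m + j) = runlen w m + j" by (rule runlen_const)
  moreover have "w (m + j) = a" using that wm by (cases j) auto
  ultimately show "w (m + j) = a \<and> runlen w (m + j) = r + j" using wm by simp
qed

lemma depends_X: "depends m E \<Longrightarrow> depends (Suc m) (\<lambda>x. E x \<and> x (Suc m) = c)"
  unfolding depends_def by (metis le_SucI order_refl)

lemma ext_kernel:
  assumes dep: "depends m E" and EA: "\<And>w. E w \<Longrightarrow> w m = a \<and> runlen w m = r"
  shows "measure M {\<omega>\<in>space M. (E (\<lambda>i. X i \<omega>) \<and> (\<forall>i. Suc m \<le> i \<and> i \<le> m + j \<longrightarrow> X i \<omega> = a)) \<and> X (Suc (m + j)) \<omega> = c}
       = measure M {\<omega>\<in>space M. E (\<lambda>i. X i \<omega>)} * (\<Prod>i\<in>{r..<r+j}. pmf (q a i) a) * pmf (q a (r + j)) c"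
proof -
  have A: "measure M {\<omega>\<in>space M. (E (\<lambda>i. X i \<omega>) \<and> (\<forall>i. Suc m \<le> i \<and> i \<le> m + j \<longrightarrow> X i \<omega> = a)) \<and> X (Suc (m + j)) \<omega> = c}
     = measure M {\<omega>\<in>space M. E (\<lambda>i. X i \<omega>) \<and> (\<forall>i. Suc m \<le> i \<and> i \<le> m + j \<longrightarrow> X i \<omega> = a)} * pmf (q a (r + j)) c"
    by (rule ext1[OF depends_run(1)[OF dep EA, of j] depends_run(2)[OF dep EA]])
  have B: "measure M {\<omega>\<in>space M. E (\<lambda>i. X i \<omega>) \<and> (\<forall>i. Suc m \<le> i \<and> i \<le> m + j \<longrightarrow> X i \<omega> = a)}
       = measure M {\<omega>\<in>space M. E (\<lambda>i. X i \<omega>)} * (\<Prod>i\<in>{r..<r+j}. pmf (q a i) a)"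
    by (rule ext_run[OF dep EA])
  show ?thesis unfolding A B ..
qed

end


lemma prod_anti:
  fixes f :: "nat \<Rightarrow> real"
  assumes "\<And>k. 0 \<le> f k \<and> f k \<le> 1" "L \<le> N"
  shows "(\<Prod>k\<in>{1..N}. f k) \<le> (\<Prod>k\<in>{1..L}. f k)"
proof -
  have "(\<Prod>k\<in>{1..N}. f k) = (\<Prod>k\<in>{1..N} - {1..L}. f k) * (\<Prod>k\<in>{1..L}. f k)"
    using assms(2) by (intro prod.subset_diff) auto
  also have "\<dots> \<le> 1 * (\<Prod>k\<in>{1..L}. f k)"
    using assms(1) by (intro mult_right_mono prod_le_1 prod_nonneg) auto
  finally show ?thesis by simp
qed

context
  fixes M :: "'w measure" and X :: "nat \<Rightarrow> 'w \<Rightarrow> letter" and q :: "letter \<Rightarrow> nat \<Rightarrow> letter pmf"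
  assumes vlmc: "vlmc_double_comb M X q"
  and lim: "\<And>a. (\<lambda>n. \<Prod>k\<in>{1..n}. pmf (q a k) a) \<longlonglongrightarrow> 0"
begin

interpretation P: prob_space M using vlmc unfolding vlmc_double_comb_def by auto

lemma Xm'[measurable]: "X i \<in> measurable M (count_space UNIV)"
  using Xm[OF vlmc] .

definition pa :: "letter \<Rightarrow> nat \<Rightarrow> real" where
  "pa a L = (\<Prod>k\<in>{1..L}. pmf (q a k) a)"

lemma pa_nonneg: "0 \<le> pa a L" unfolding pa_def by (simp add: prod_nonneg)

lemma runA_bound:
  assumes "L \<le> N"
  shows "measure M {\<omega>\<in>space M. (\<lambda>x. x s = a \<and> runlen x s = 1) (\<lambda>i. X i \<omega>) \<and> (\<forall>i. Suc s \<le> i \<and> i \<le> s + N \<longrightarrow> X i \<omega> = a)} \<le> pa a L"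
proof -
  have dep: "depends s (\<lambda>x. x s = a \<and> runlen x s = 1)"
  proof (unfold depends_def, intro allI impI)
    fix x y :: "nat \<Rightarrow> letter" assume h: "\<forall>i\<le>s. x i = y i"
    then have "runlen x s = runlen y s" by (rule runlen_cong)
    then show "(x s = a \<and> runlen x s = 1) = (y s = a \<and> runlen y s = 1)" using h by auto
  qed
  have "measure M {\<omega>\<in>space M. (\<lambda>x. x s = a \<and> runlen x s = 1) (\<lambda>i. X i \<omega>) \<and> (\<forall>i. Suc s \<le> i \<and> i \<le> s + N \<longrightarrow> X i \<omega> = a)}
     = measure M {\<omega>\<in>space M. (\<lambda>x. x s = a \<and> runlen x s = 1) (\<lambda>i. X i \<omega>)} * (\<Prod>i\<in>{1..<1+N}. pmf (q a i) a)"
    by (rule ext_run[OF vlmc dep]) auto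
  also have "\<dots> \<le> 1 * (\<Prod>i\<in>{1..<1+N}. pmf (q a i) a)"
    by (intro mult_right_mono prod_nonneg) auto
  also have "(\<Prod>i\<in>{1..<1+N}. pmf (q a i) a) = pa a N" unfolding pa_def
    by (rule prod.cong) auto
  also have "pa a N \<le> pa a L" unfolding pa_def using assms by (intro prod_anti) (auto simp: pmf_le_1)
  finally show ?thesis by simp
qed

lemma runlen_meas[measurable]: "(\<lambda>\<omega>. runlen (\<lambda>i. X i \<omega>) n) \<in> measurable M (count_space UNIV)"
proof (induction n)
  case 0 then show ?case by simp
next
  case (Suc n)
  note [measurable] = Suc.IH
  show ?case by simp measurable
qed

lemma noj_bound:
  "measure M {\<omega>\<in>space M. \<forall>k>m. X k \<omega> = X (k - 1) \<omega>} \<le> real (2 * (m + 1)) * (pa D L + pa U L)"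
proof -
  define A where "A = (\<lambda>p. {\<omega>\<in>space M. (\<lambda>x. x (fst p) = snd p \<and> runlen x (fst p) = 1) (\<lambda>i. X i \<omega>)
        \<and> (\<forall>i. Suc (fst p) \<le> i \<and> i \<le> fst p + (m + L - fst p) \<longrightarrow> X i \<omega> = snd p)})"
  define I where "I = {..m} \<times> (UNIV :: letter set)"
  have Asets: "A p \<in> sets M" for p unfolding A_def by measurable
  have fin: "finite I" unfolding I_def by auto
  have sub: "{\<omega>\<in>space M. \<forall>k>m. X k \<omega> = X (k - 1) \<omega>} \<subseteq> (\<Union>p\<in>I. A p)"
  proof
    fix \<omega> assume \<omega>: "\<omega> \<in> {\<omega>\<in>space M. \<forall>k>m. X k \<omega> = X (k - 1) \<omega>}"
    have cst: "X i \<omega> = X m \<omega>" if "m \<le> i" for i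
      using that
    proof (induction i rule: dec_induct)
      case base then show ?case by simp
    next
      case (step i)
      have "Suc i > m" using step.hyps by simp
      then have "X (Suc i) \<omega> = X (Suc i - 1) \<omega>" using \<omega> by blast
      then show ?case using step.IH by simp
    qed
    obtain s where s: "s \<le> m" "runlen (\<lambda>i. X i \<omega>) s = 1" "\<forall>i. s \<le> i \<and> i \<le> m \<longrightarrow> X i \<omega> = X s \<omega>"
      using run_start[of m "\<lambda>i. X i \<omega>"] by auto
    have run: "\<forall>i. Suc s \<le> i \<and> i \<le> s + (m + L - s) \<longrightarrow> X i \<omega> = X s \<omega>"
    proof (intro allI impI)
      fix i assume i: "Suc s \<le> i \<and> i \<le> s + (m + L - s)"
      show "X i \<omega> = X s \<omega>"
      proof (cases "i \<le> m")
        case True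
        then show ?thesis using i s(3)[rule_format, of i] by simp
      next
        case False
        then have "X i \<omega> = X m \<omega>" using cst[of i] by simp
        also have "X m \<omega> = X s \<omega>" using s(1) s(3)[rule_format, of m] by simp
        finally show ?thesis .
      qed
    qed
    have "\<omega> \<in> space M" using \<omega> by simp
    then have "\<omega> \<in> A (s, X s \<omega>)"
      by (simp only: A_def mem_Collect_eq fst_conv snd_conv) (use s(2) run in blast)
    moreover have "(s, X s \<omega>) \<in> I" unfolding I_def using s(1) by simp
    ultimately show "\<omega> \<in> (\<Union>p\<in>I. A p)" by blast
  qed
  have "measure M {\<omega>\<in>space M. \<forall>k>m. X k \<omega> = X (k - 1) \<omega>} \<le> measure M (\<Union>p\<in>I. A p)"
    using sub Asets fin by (intro P.finite_measure_mono) auto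
  also have "\<dots> \<le> (\<Sum>p\<in>I. measure M (A p))"
    using Asets fin by (intro P.finite_measure_subadditive_finite) auto
  also have "\<dots> \<le> (\<Sum>p\<in>I. pa D L + pa U L)"
  proof (rule sum_mono)
    fix p assume p: "p \<in> I"
    have "measure M (A p) \<le> pa (snd p) L" unfolding A_def using p unfolding I_def
      by (intro runA_bound) auto
    also have "\<dots> \<le> pa D L + pa U L" using pa_nonneg[of D L] pa_nonneg[of U L] by (cases "snd p") auto
    finally show "measure M (A p) \<le> pa D L + pa U L" .
  qed
  also have "\<dots> = real (2 * (m + 1)) * (pa D L + pa U L)"
    unfolding I_def by (simp add: card_cartesian_product UNIV_letter)
  finally show ?thesis .
qed

lemma AE_infj: "AE \<omega> in M. infj (\<lambda>i. X i \<omega>)"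
proof -
  have "AE \<omega> in M. \<exists>k>m. X k \<omega> \<noteq> X (k - 1) \<omega>" for m
  proof (rule AE_I')
    let ?N = "{\<omega>\<in>space M. \<forall>k>m. X k \<omega> = X (k - 1) \<omega>}"
    have Ns: "?N \<in> sets M" by measurable
    have "(\<lambda>L. real (2 * (m + 1)) * (pa D L + pa U L)) \<longlonglongrightarrow> real (2 * (m + 1)) * (0 + 0)"
      unfolding pa_def by (intro tendsto_intros lim)
    then have "measure M ?N \<le> real (2 * (m + 1)) * (0 + 0)"
      by (rule LIMSEQ_le_const) (use noj_bound in auto)
    then have "measure M ?N \<le> 0" by simp
    then have "measure M ?N = 0" by (simp add: antisym)
    then show "?N \<in> null_sets M" using Ns by (simp add: P.emeasure_eq_measure null_setsI)
    show "{\<omega> \<in> space M. \<not> (\<exists>k>m. X k \<omega> \<noteq> X (k - 1) \<omega>)} \<subseteq> ?N" by auto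
  qed
  then have "AE \<omega> in M. \<forall>m. \<exists>k>m. X k \<omega> \<noteq> X (k - 1) \<omega>" by (simp add: AE_all_countable)
  then show ?thesis unfolding infj_def by simp
qed

end


definition Ev :: "nat \<Rightarrow> (nat \<Rightarrow> letter) \<Rightarrow> (nat \<Rightarrow> nat) \<Rightarrow> (nat \<Rightarrow> letter) \<Rightarrow> bool" where
  "Ev n js ts x \<longleftrightarrow> (\<forall>i\<le>n. jumpJ x i = js i \<and> sojT x i = ts i)"

lemma Ev_jumpB: "infj x \<Longrightarrow> Ev n js ts x \<Longrightarrow> i \<le> n \<Longrightarrow> jumpB x i = (\<Sum>l\<le>i. ts l)"
  using sum_sojT[of x i] unfolding Ev_def by (metis (no_types, lifting) atMost_iff order_trans sum.cong)

lemma Ev_transfer: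
  assumes x: "infj x" and y: "infj y" and xy: "\<forall>i\<le>S. x i = y i" and S: "S = (\<Sum>l\<le>n. ts l)"
    and E: "Ev n js ts x"
  shows "Ev n js ts y"
proof -
  have le: "jumpB x i \<le> S" if "i \<le> n" for i
  proof -
    have "jumpB x i = (\<Sum>l\<le>i. ts l)" using Ev_jumpB[OF x E that] .
    also have "\<dots> \<le> (\<Sum>l\<le>n. ts l)" using that by (intro sum_mono2) auto
    finally show ?thesis using S by simp
  qed
  have eq: "jumpB y i = jumpB x i" if "i \<le> n" for i
  proof -
    have "jumpB x i = jumpB y i" by (rule jumpB_local[OF x y xy]) (use le[OF that] in simp)
    then show ?thesis by simp
  qed
  show ?thesis unfolding Ev_def
  proof (intro allI impI)
    fix i assume i: "i \<le> n"
    have "sojT y i = sojT x i" using eq[OF i] eq[of "i - 1"] i unfolding sojT_def by auto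
    moreover have "jumpJ y i = jumpJ x i" unfolding jumpJ_def using eq[OF i] le[OF i] xy by auto
    ultimately show "jumpJ y i = js i \<and> sojT y i = ts i" using E i unfolding Ev_def by auto
  qed
qed

lemma step_equiv:
  assumes x: "infj x" and E: "Ev n js ts x" and S: "S = (\<Sum>l\<le>n. ts l)"
  shows "(jumpJ x (Suc n) = b \<and> sojT x (Suc n) = k) \<longleftrightarrow>
    (1 \<le> k \<and> b \<noteq> js n \<and> (\<forall>i. Suc S \<le> i \<and> i \<le> S + (k - 1) \<longrightarrow> x i = js n) \<and> x (Suc (S + (k - 1))) = b)"
proof -
  have BS: "jumpB x n = S" using Ev_jumpB[OF x E, of n] S by simp
  have xS: "x S = js n" using E BS unfolding Ev_def jumpJ_def by auto
  show ?thesis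
  proof
    assume h: "jumpJ x (Suc n) = b \<and> sojT x (Suc n) = k"
    have lt: "jumpB x n < jumpB x (Suc n)" by (rule jumpB_Suc_props(1)[OF x])
    have B1: "jumpB x (Suc n) = S + k" using h lt BS unfolding sojT_def by auto
    have k1: "1 \<le> k" using B1 lt BS by simp
    have cst: "x i = js n" if "S \<le> i" "i < S + k" for i
      using jumpB_const[OF x, of n i] that BS B1 xS by simp
    have "x (S + k) = b" using h B1 unfolding jumpJ_def by simp
    moreover have "x (S + k) \<noteq> x (S + k - 1)" using jumpB_Suc_props(2)[OF x, of n] B1 by simp
    moreover have "x (S + k - 1) = js n" using cst k1 by simp
    ultimately show "1 \<le> k \<and> b \<noteq> js n \<and> (\<forall>i. Suc S \<le> i \<and> i \<le> S + (k - 1) \<longrightarrow> x i = js n) \<and> x (Suc (S + (k - 1))) = b"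
      using k1 cst by auto
  next
    assume h: "1 \<le> k \<and> b \<noteq> js n \<and> (\<forall>i. Suc S \<le> i \<and> i \<le> S + (k - 1) \<longrightarrow> x i = js n) \<and> x (Suc (S + (k - 1))) = b"
    have cst: "x i = js n" if "S \<le> i" "i < S + k" for i
      using h that xS by (cases "i = S") auto
    have k': "Suc (S + (k - 1)) = S + k" using h by simp
    have xk: "x (S + k) = b" using h k' by metis
    have "jumpB x (Suc n) = (LEAST k'. k' > S \<and> x k' \<noteq> x (k' - 1))" using BS by simp
    also have "\<dots> = S + k"
    proof (rule Least_equality)
      have "S \<le> S + k - 1" "S + k - 1 < S + k" using h by auto
      then have xk1: "x (S + k - 1) = js n" by (rule cst)
      show "S < S + k \<and> x (S + k) \<noteq> x (S + k - 1)"
        using h xk xk1 by simp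
      fix k' assume k': "S < k' \<and> x k' \<noteq> x (k' - 1)"
      show "S + k \<le> k'"
      proof (rule ccontr)
        assume "\<not> S + k \<le> k'"
        then have "x k' = js n" "x (k' - 1) = js n" using cst k' by auto
        then show False using k' by simp
      qed
    qed
    finally have B1: "jumpB x (Suc n) = S + k" .
    show "jumpJ x (Suc n) = b \<and> sojT x (Suc n) = k"
      using B1 BS xk unfolding jumpJ_def sojT_def by simp
  qed
qed

lemma trunc_dep: "depends S (\<lambda>x. P (trunc S x))"
  unfolding depends_def
proof (intro allI impI)
  fix x y :: "nat \<Rightarrow> letter" assume "\<forall>i\<le>S. x i = y i"
  then have "trunc S x = trunc S y" unfolding trunc_def by auto
  then show "P (trunc S x) = P (trunc S y)" by simp
qed



context
  fixes M :: "'w measure" and X :: "nat \<Rightarrow> 'w \<Rightarrow> letter"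
  assumes Xmm[measurable]: "\<And>i. X i \<in> measurable M (count_space UNIV)"
begin
lemma jumpB_meas[measurable]: "(\<lambda>\<omega>. jumpB (\<lambda>i. X i \<omega>) n) \<in> measurable M (count_space UNIV)"
  by (induction n) auto
lemma jumpJ_meas[measurable]: "(\<lambda>\<omega>. jumpJ (\<lambda>i. X i \<omega>) n) \<in> measurable M (count_space UNIV)"
  unfolding jumpJ_def by (rule measurable_compose_countable[where f="\<lambda>i \<omega>. X i \<omega>"]) auto
lemma sojT_meas[measurable]: "(\<lambda>\<omega>. sojT (\<lambda>i. X i \<omega>) n) \<in> measurable M (count_space UNIV)"
  unfolding sojT_def by measurable
end

theorem mainTheorem1:
  fixes M :: "'w measure" and X :: "nat \<Rightarrow> 'w \<Rightarrow> letter" and q :: "letter \<Rightarrow> nat \<Rightarrow> letter pmf"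
  assumes vlmc: "vlmc_double_comb M X q"
    and lim: "\<And>a. (\<lambda>n. \<Prod>k\<in>{1..n}. pmf (q a k) a) \<longlonglongrightarrow> 0"
  shows "(AE \<omega> in M. \<forall>n. \<exists>k. k > jumpB (\<lambda>i. X i \<omega>) n \<and> X k \<omega> \<noteq> X (k - 1) \<omega>)
    \<and> markov_renewal_chain M (\<lambda>n \<omega>. jumpJ (\<lambda>i. X i \<omega>) n) (\<lambda>n \<omega>. sojT (\<lambda>i. X i \<omega>) n) (comb_kernel q)
    \<and> semi_markov_chain_of M (\<lambda>n \<omega>. jumpJ (\<lambda>i. X i \<omega>) n) (\<lambda>n \<omega>. sojT (\<lambda>i. X i \<omega>) n) X"
proof -
  interpret P: prob_space M using vlmc unfolding vlmc_double_comb_def by auto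
  note [measurable] = Xm[OF vlmc]
  have AEi: "AE \<omega> in M. infj (\<lambda>i. X i \<omega>)" by (rule AE_infj[OF vlmc lim])
  have part1: "AE \<omega> in M. \<forall>n. \<exists>k. k > jumpB (\<lambda>i. X i \<omega>) n \<and> X k \<omega> \<noteq> X (k - 1) \<omega>"
    using AEi by eventually_elim (auto simp: infj_def)
  have part3: "semi_markov_chain_of M (\<lambda>n \<omega>. jumpJ (\<lambda>i. X i \<omega>) n) (\<lambda>n \<omega>. sojT (\<lambda>i. X i \<omega>) n) X"
    unfolding semi_markov_chain_of_def
    using AEi
  proof eventually_elim
    case (elim \<omega>)
    show ?case
    proof (intro conjI allI impI)
      show "sojT (\<lambda>i. X i \<omega>) 0 = 0" by (simp add: sojT_def)
      fix n j assume h: "(\<Sum>i\<le>n. sojT (\<lambda>i. X i \<omega>) i) \<le> j \<and> j < (\<Sum>i\<le>Suc n. sojT (\<lambda>i. X i \<omega>) i)"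
      then have "jumpB (\<lambda>i. X i \<omega>) n \<le> j" "j < jumpB (\<lambda>i. X i \<omega>) (Suc n)"
        using sum_sojT[OF elim, of n] sum_sojT[OF elim, of "Suc n"] by auto
      then show "X j \<omega> = jumpJ (\<lambda>i. X i \<omega>) n" unfolding jumpJ_def using jumpB_const[OF elim] by simp
    qed
  qed
  have part2: "markov_renewal_chain M (\<lambda>n \<omega>. jumpJ (\<lambda>i. X i \<omega>) n) (\<lambda>n \<omega>. sojT (\<lambda>i. X i \<omega>) n) (comb_kernel q)"
    unfolding markov_renewal_chain_def
  proof (intro conjI allI)
    show "comb_kernel q a b 0 = 0" for a b by (simp add: comb_kernel_def)
    fix n :: nat and js :: "nat \<Rightarrow> letter" and ts :: "nat \<Rightarrow> nat" and b :: letter and k :: nat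
    define S where "S = (\<Sum>l\<le>n. ts l)"
    define E where "E = (\<lambda>x. Ev n js ts (trunc S x))"
    have depE: "depends S E" unfolding E_def by (rule trunc_dep)
    have EvE: "Ev n js ts x \<longleftrightarrow> E x" if "infj x" for x
    proof -
      have ag1: "\<forall>i\<le>S. x i = trunc S x i" by (simp add: trunc_agree)
      have ag2: "\<forall>i\<le>S. trunc S x i = x i" by (simp add: trunc_agree)
      show ?thesis unfolding E_def
        using Ev_transfer[OF that trunc_infj ag1 S_def] Ev_transfer[OF trunc_infj that ag2 S_def] by blast
    qed
    have EA: "w S = js n \<and> runlen w S = 1" if "E w" for w
    proof -
      let ?y = "trunc S w"
      have Ey: "Ev n js ts ?y" using that unfolding E_def .
      have B: "jumpB ?y n = S" using Ev_jumpB[OF trunc_infj Ey, of n] S_def by simp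
      have "?y S = js n" using Ey B unfolding Ev_def jumpJ_def by auto
      moreover have "runlen ?y S = 1" using runlen_jumpB[OF trunc_infj, of S w n] B by simp
      moreover have "runlen w S = runlen ?y S" by (rule runlen_cong) (simp add: trunc_agree)
      ultimately show ?thesis by (simp add: trunc_agree)
    qed
    let ?L = "{\<omega>\<in>space M. (\<forall>i\<le>n. jumpJ (\<lambda>i. X i \<omega>) i = js i \<and> sojT (\<lambda>i. X i \<omega>) i = ts i)
       \<and> jumpJ (\<lambda>i. X i \<omega>) (Suc n) = b \<and> sojT (\<lambda>i. X i \<omega>) (Suc n) = k}"
    let ?R = "{\<omega>\<in>space M. \<forall>i\<le>n. jumpJ (\<lambda>i. X i \<omega>) i = js i \<and> sojT (\<lambda>i. X i \<omega>) i = ts i}"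
    have Lm: "?L \<in> sets M" by measurable
    have Rm: "?R \<in> sets M" by measurable
    have Es: "{\<omega>\<in>space M. E (\<lambda>i. X i \<omega>)} \<in> sets M" by (rule dep_sets[OF vlmc depE])
    have R_eq: "measure M ?R = measure M {\<omega>\<in>space M. E (\<lambda>i. X i \<omega>)}"
    proof (rule measure_eq_AE[OF _ Rm Es])
      show "AE \<omega> in M. (\<omega> \<in> ?R) = (\<omega> \<in> {\<omega>\<in>space M. E (\<lambda>i. X i \<omega>)})"
        using AEi by eventually_elim (auto simp: EvE[symmetric] Ev_def)
    qed
    show "measure M ?L = measure M ?R * comb_kernel q (js n) b k"
    proof (cases "1 \<le> k \<and> b \<noteq> js n")
      case False
      have "measure M ?L = measure M {}"
      proof (rule measure_eq_AE[OF _ Lm])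
        show "AE \<omega> in M. (\<omega> \<in> ?L) = (\<omega> \<in> {})"
          using AEi
        proof eventually_elim
          case (elim \<omega>)
          show ?case using step_equiv[OF elim _ S_def, of js b k] False unfolding Ev_def by auto
        qed
      qed simp
      moreover have "comb_kernel q (js n) b k = 0" using False unfolding comb_kernel_def by auto
      ultimately show ?thesis by simp
    next
      case True
      define a where "a = js n"
      let ?B = "{\<omega>\<in>space M. (E (\<lambda>i. X i \<omega>) \<and> (\<forall>i. Suc S \<le> i \<and> i \<le> S + (k - 1) \<longrightarrow> X i \<omega> = a)) \<and> X (Suc (S + (k - 1))) \<omega> = b}"
      have Bm: "?B \<in> sets M"
      proof -
        have "depends (Suc (S + (k - 1))) (\<lambda>x. (E x \<and> (\<forall>i. Suc S \<le> i \<and> i \<le> S + (k - 1) \<longrightarrow> x i = a)) \<and> x (Suc (S + (k - 1))) = b)"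
          by (rule depends_X[OF vlmc depends_run(1)[OF vlmc depE]]) (use EA a_def in auto)
        then show ?thesis by (rule dep_sets[OF vlmc])
      qed
      have "measure M ?L = measure M ?B"
      proof (rule measure_eq_AE[OF _ Lm Bm])
        show "AE \<omega> in M. (\<omega> \<in> ?L) = (\<omega> \<in> ?B)"
          using AEi
        proof eventually_elim
          case (elim \<omega>)
          show ?case using step_equiv[OF elim _ S_def, of js b k] True EvE[OF elim] unfolding Ev_def a_def
            by auto
        qed
      qed
      also have "\<dots> = measure M {\<omega>\<in>space M. E (\<lambda>i. X i \<omega>)} * (\<Prod>i\<in>{1..<1+(k - 1)}. pmf (q a i) a) * pmf (q a (1 + (k - 1))) b"
        by (rule ext_kernel[OF vlmc depE]) (use EA a_def in auto)
      also have "\<dots> = measure M ?R * comb_kernel q (js n) b k"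
        using True unfolding R_eq comb_kernel_def a_def
        by (auto intro!: prod.cong)
      finally show ?thesis .
    qed
  qed
  show ?thesis using part1 part2 part3 by blast
qed


end
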